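(* For every Hessenberg space $H$ of $n\times n$ matrices, the variety $X_H=\{[g]\in GL_n(\mathbb{C})/B : g^{-1}E_{1n}g\in H\}$ is a union of Schubert varieties $Y_w$.
   Context: $B$ is the group of invertible upper-triangular $n\times n$ complex matrices; $[g]\in GL_n(\mathbb{C})/B$ denotes the flag whose $k$-dimensional subspace is spanned by the first $k$ columns of $g$. $E_{kl}$ denotes the matrix unit with $1$ in entry $(k,l)$ and $0$ elsewhere. A permutation $w$ of $\{1,\dots,n\}$ is identified with the permutation matrix satisfying $we_k=e_{w(k)}$ for the standard basis $e_1,\dots,e_n$. The Schubert variety $Y_w$ is the closure of $\{[bw]: b\in B\}$. A Hessenberg space is a subspace of the form $H_h=\operatorname{span}\{E_{kl}: k\le h(l)\}$ for a nondecreasing function $h:\{1,\dots,n\}\to\{0,1,\dots,n\}$. *)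

theory Defs
  imports "HOL-Analysis.Analysis" "HOL-Combinatorics.Permutations"
begin

type_synonym 'n cmat = "((complex,'n) vec,'n) vec"

text \<open>Index set {1..n} is modelled by a finite linearly ordered type 'n; idx k is the
  1-based position of k. Matrices are 'n cmat with A$i$j the (i,j) entry.\<close>

definition idx :: "'n::{finite,wellorder} \<Rightarrow> nat" where
  "idx k = card {i. i \<le> k}"

definition GL :: "(('n::finite) cmat) set" where
  "GL = {g. invertible g}"

definition upper_tri :: "(('n::{finite,wellorder}) cmat) set" where
  "upper_tri = {b. invertible b \<and> (\<forall>i j. j < i \<longrightarrow> b$i$j = 0)}"

definition Eunit :: "'n::{finite,wellorder} \<Rightarrow> 'n \<Rightarrow> 'n cmat" where
  "Eunit k l = (\<chi> i j. if i = k \<and> j = l then 1 else 0)"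

definition perm_mat :: "('n::{finite,wellorder} \<Rightarrow> 'n) \<Rightarrow> 'n cmat" where
  "perm_mat w = (\<chi> i j. if i = w j then 1 else 0)"

text \<open>Flag [g]: k-th subspace is the complex span of the first k columns of g, i.e. the
  set of g x with x supported on the first k coordinates.\<close>
definition flag :: "'n cmat \<Rightarrow> nat \<Rightarrow> (complex,'n::{finite,wellorder}) vec set" where
  "flag g k = {g *v x | x. \<forall>j. k < idx j \<longrightarrow> x$j = 0}"

definition flag_variety :: "(nat \<Rightarrow> (complex,'n::{finite,wellorder}) vec set) set" where
  "flag_variety = flag ` GL"

text \<open>Quotient topology on GL_n/B induced by the map g \<mapsto> [g] from GL_n (with the
  subspace topology of the Euclidean topology on matrices).\<close>
definition flag_top :: "(nat \<Rightarrow> (complex,'n::{finite,wellorder}) vec set) topology" where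
  "flag_top = topology (\<lambda>U. U \<subseteq> flag_variety \<and>
       openin (subtopology euclidean GL) {g \<in> GL. flag g \<in> U})"

definition schubert :: "('n::{finite,wellorder} \<Rightarrow> 'n) \<Rightarrow> (nat \<Rightarrow> (complex,'n) vec set) set" where
  "schubert w = flag_top closure_of {flag (b ** perm_mat w) | b. b \<in> upper_tri}"

text \<open>Hessenberg space H_h = span{E_kl : k \<le> h l}, written out as the matrices vanishing
  at all entries (k,l) with k > h l.\<close>
definition hessenberg_fun :: "('n::{finite,wellorder} \<Rightarrow> nat) \<Rightarrow> bool" where
  "hessenberg_fun h \<longleftrightarrow> mono h \<and> (\<forall>l. h l \<le> CARD('n))"

definition hess_space :: "('n::{finite,wellorder} \<Rightarrow> nat) \<Rightarrow> ('n cmat) set" where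
  "hess_space h = {A. \<forall>k l. h l < idx k \<longrightarrow> A$k$l = 0}"

definition XH :: "('n cmat) set \<Rightarrow> (nat \<Rightarrow> (complex,'n::{finite,wellorder}) vec set) set" where
  "XH H = {flag g | g. g \<in> GL \<and> matrix_inv g ** Eunit (LEAST i. True) (GREATEST i. True) ** g \<in> H}"

end

theory Submission
  imports Defs
begin


lemma idx_mono: fixes i j :: "'n::{finite,wellorder}" assumes "i < j" shows "idx i < idx j"
  unfolding idx_def
proof (rule psubset_card_mono)
  have "j \<notin> {x. x \<le> i}" using assms by auto
  moreover have "j \<in> {x. x \<le> j}" by auto
  moreover have "{x. x \<le> i} \<subseteq> {x. x \<le> j}" using assms by auto
  ultimately show "{x. x \<le> i} \<subset> {x. x \<le> j}" by blast
qed simp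

lemma idx_less_iff: fixes i j :: "'n::{finite,wellorder}" shows "idx i < idx j \<longleftrightarrow> i < j"
  by (metis idx_mono less_asym not_less_iff_gr_or_eq)

lemma idx_le_iff: fixes i j :: "'n::{finite,wellorder}" shows "idx i \<le> idx j \<longleftrightarrow> i \<le> j"
  by (meson idx_less_iff not_le)

lemma minv: fixes A :: "'a::field^'n^'n" assumes "invertible A"
  shows "A ** matrix_inv A = mat 1" "matrix_inv A ** A = mat 1"
  using someI_ex[OF assms[unfolded invertible_def]] unfolding matrix_inv_def by auto

lemma minv_unique: fixes A :: "'a::field^'n^'n" assumes "invertible A" "A ** B = mat 1"
  shows "matrix_inv A = B"
proof -
  have "matrix_inv A = matrix_inv A ** (A ** B)" by (simp add: assms matrix_mul_rid)
  also have "\<dots> = B" by (simp add: matrix_mul_assoc minv(2)[OF assms(1)] matrix_mul_lid)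
  finally show ?thesis .
qed

lemma invertible_minv: fixes A :: "'a::field^'n^'n" assumes "invertible A"
  shows "invertible (matrix_inv A)"
  unfolding invertible_def using minv[OF assms] by blast

lemma minv_mult: fixes A B :: "'a::field^'n^'n" assumes "invertible A" "invertible B"
  shows "matrix_inv (A ** B) = matrix_inv B ** matrix_inv A"
proof (rule minv_unique)
  show "invertible (A ** B)" using assms invertible_mult by blast
  have "A ** B ** (matrix_inv B ** matrix_inv A) = A ** (B ** matrix_inv B) ** matrix_inv A"
    by (simp add: matrix_mul_assoc)
  also have "\<dots> = mat 1" by (simp add: minv[OF assms(1)] minv[OF assms(2)] matrix_mul_rid)
  finally show "A ** B ** (matrix_inv B ** matrix_inv A) = mat 1" .
qed

lemma mv_axis: fixes M :: "'a::comm_ring_1^'n::finite^'m::finite" shows "(M *v axis j 1) $ i = M $ i $ j"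
  by (simp add: matrix_vector_mult_def axis_def if_distrib cong: if_cong)

lemma ut_det: fixes b :: "'a::comm_ring_1^'n::{finite,wellorder}^'n::{finite,wellorder}"
  assumes "\<forall>i j. j < i \<longrightarrow> b$i$j = 0" shows "det b = (\<Prod>i\<in>UNIV. b$i$i)"
  using det_upperdiagonal[of b] assms by blast

lemma minv_ut: fixes b :: "'n::{finite,wellorder} cmat"
  assumes "b \<in> upper_tri" shows "matrix_inv b \<in> upper_tri"
proof -
  have inv: "invertible b" and ut: "\<forall>i j. j < i \<longrightarrow> b$i$j = 0" using assms upper_tri_def by auto
  have d0: "det b \<noteq> 0" using inv invertible_det_nz by blast
  have "matrix_inv b $ i $ j = 0" if "j < i" for i j
  proof -
    let ?x = "matrix_inv b *v axis j 1"
    have "b *v ?x = axis j 1"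
      by (simp add: matrix_vector_mul_assoc minv[OF inv] matrix_vector_mul_lid)
    then have x: "?x = (\<chi> k. det(\<chi> r s. if s=k then axis j 1 $r else b$r$s) / det b)"
      using cramer[OF d0] by blast
    let ?C = "(\<chi> r s. if s=i then axis j 1 $r else b$r$s) :: 'n cmat"
    have "det ?C = (\<Prod>k\<in>UNIV. ?C$k$k)"
      by (rule ut_det) (use ut that in \<open>auto simp: axis_def\<close>)
    also have "\<dots> = 0" using that by (intro prod_zero) (auto simp: axis_def)
    finally have "?x $ i = 0" by (subst x) simp
    then show ?thesis by (simp add: mv_axis)
  qed
  then show ?thesis unfolding upper_tri_def using invertible_minv[OF inv] by auto
qed

lemma ut_mult: fixes a b :: "'n::{finite,wellorder} cmat"
  assumes "a \<in> upper_tri" "b \<in> upper_tri" shows "a ** b \<in> upper_tri"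
proof -
  have "(a ** b) $ i $ j = 0" if "j < i" for i j
    unfolding matrix_matrix_mult_def
    using assms that by (auto simp: upper_tri_def intro!: sum.neutral) (meson not_less less_le_trans)
  then show ?thesis using assms invertible_mult unfolding upper_tri_def by auto
qed

lemma mat1_ut: "(mat 1 :: 'n::{finite,wellorder} cmat) \<in> upper_tri"
proof -
  have "invertible (mat 1 :: 'n cmat)" unfolding invertible_def using matrix_mul_lid by blast
  then show ?thesis unfolding upper_tri_def by (auto simp: mat_def)
qed



definition Vs :: "nat \<Rightarrow> (complex,'n::{finite,wellorder}) vec set" where
  "Vs k = {x. \<forall>j. k < idx j \<longrightarrow> x$j = 0}"

lemma flag_img: "flag g k = (\<lambda>x. g *v x) ` Vs k"
  unfolding flag_def Vs_def by auto

lemma ut_Vs: fixes c :: "'n::{finite,wellorder} cmat"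
  assumes "\<forall>i j. j < i \<longrightarrow> c$i$j = 0" "x \<in> Vs k" shows "c *v x \<in> Vs k"
proof -
  have "(c *v x) $ i = 0" if "k < idx i" for i
    unfolding matrix_vector_mult_def using assms that
    by (auto simp: Vs_def intro!: sum.neutral) (metis idx_le_iff le_less_trans not_le)
  then show ?thesis by (simp add: Vs_def)
qed

lemma flag_mult_ut: fixes c :: "'n::{finite,wellorder} cmat"
  assumes "c \<in> upper_tri" shows "flag (g ** c) = flag g"
proof
  fix k
  have inv: "invertible c" and ut: "\<forall>i j. j < i \<longrightarrow> c$i$j = 0" using assms upper_tri_def by auto
  have ut': "\<forall>i j. j < i \<longrightarrow> matrix_inv c$i$j = 0" using minv_ut[OF assms] upper_tri_def by auto
  show "flag (g ** c) k = flag g k"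
  proof
    show "flag (g ** c) k \<subseteq> flag g k"
      unfolding flag_img using ut_Vs[OF ut] by (auto simp: matrix_vector_mul_assoc[symmetric])
    show "flag g k \<subseteq> flag (g ** c) k"
    proof
      fix y assume "y \<in> flag g k"
      then obtain x where x: "x \<in> Vs k" "y = g *v x" unfolding flag_img by auto
      have "y = (g ** c) *v (matrix_inv c *v x)"
        using x by (simp add: matrix_vector_mul_assoc minv[OF inv] matrix_mul_assoc[symmetric] matrix_mul_rid)
      then show "y \<in> flag (g ** c) k" unfolding flag_img using ut_Vs[OF ut' x(1)] by blast
    qed
  qed
qed

lemma axis_Vs: "axis j 1 \<in> Vs (idx (j::'n::{finite,wellorder}))"
  unfolding Vs_def axis_def by auto

lemma flag_eq: fixes g g' :: "'n::{finite,wellorder} cmat"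
  assumes "invertible g" "invertible g'" "flag g = flag g'"
  shows "\<exists>d\<in>upper_tri. g' = g ** d"
proof -
  let ?d = "matrix_inv g ** g'"
  have gd: "g ** ?d = g'" by (simp add: matrix_mul_assoc minv[OF assms(1)] matrix_mul_lid)
  have "?d $ i $ j = 0" if "j < i" for i j
  proof -
    have "g' *v axis j 1 \<in> flag g' (idx j)" unfolding flag_img using axis_Vs by blast
    then have "g' *v axis j 1 \<in> flag g (idx j)" using assms(3) by simp
    then obtain x where x: "x \<in> Vs (idx j)" "g' *v axis j 1 = g *v x" unfolding flag_img by auto
    have "?d *v axis j 1 = x"
      by (simp add: matrix_vector_mul_assoc[symmetric] x(2)) 
         (simp add: matrix_vector_mul_assoc minv[OF assms(1)] matrix_vector_mul_lid)
    then have "?d $ i $ j = x $ i" by (metis mv_axis)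
    also have "\<dots> = 0" using x(1) that idx_less_iff unfolding Vs_def by blast
    finally show ?thesis .
  qed
  moreover have "invertible ?d" using invertible_mult invertible_minv assms by blast
  ultimately show ?thesis using gd unfolding upper_tri_def by auto
qed

lemma hess_left: fixes b :: "'n::{finite,wellorder} cmat" and h :: "'n \<Rightarrow> nat"
  assumes "\<forall>i j. j < i \<longrightarrow> b$i$j = 0" "A \<in> hess_space h" shows "b ** A \<in> hess_space h"
  unfolding hess_space_def
proof (intro CollectI allI impI)
  fix k l :: 'n assume kl: "h l < idx k"
  show "(b ** A) $ k $ l = 0"
    unfolding matrix_matrix_mult_def using assms kl
    by (auto simp: hess_space_def intro!: sum.neutral) (metis idx_le_iff le_less_trans not_le)
qed

lemma hess_right: fixes c :: "'n::{finite,wellorder} cmat" and h :: "'n \<Rightarrow> nat"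
  assumes "mono h" "\<forall>i j. j < i \<longrightarrow> c$i$j = 0" "A \<in> hess_space h" shows "A ** c \<in> hess_space h"
  unfolding hess_space_def
proof (intro CollectI allI impI)
  fix k l :: 'n assume kl: "h l < idx k"
  have z: "A $ k $ m * c $ m $ l = 0" for m
  proof (cases "l < m")
    case True then show ?thesis using assms(2) by simp
  next
    case False then have "h m \<le> h l" using assms(1) by (simp add: monoD)
    then show ?thesis using assms(3) kl unfolding hess_space_def by simp
  qed
  show "(A ** c) $ k $ l = 0"
    unfolding matrix_matrix_mult_def by (simp add: z)
qed

lemma hess_scale: "A \<in> hess_space h \<Longrightarrow> (\<chi> i j. s * A$i$j) \<in> hess_space h"
  unfolding hess_space_def by simp

lemma scale_mid: fixes X M Y :: "'a::comm_ring_1^'n::finite^'n"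
  shows "X ** (\<chi> i j. s * M$i$j) ** Y = (\<chi> i j. s * (X ** M ** Y)$i$j)"
  by (simp add: vec_eq_iff matrix_matrix_mult_def sum_distrib_left sum_distrib_right mult_ac)

lemma E_entry: fixes A B :: "'a::comm_ring_1^'n::finite^'n"
  shows "(A ** (\<chi> i j. if i = p \<and> j = q then 1 else 0) ** B) $ i $ j = A$i$p * B$q$j"
proof -
  have 1: "(A ** (\<chi> i j. if i = p \<and> j = q then 1 else 0)) $ i $ k = (if k = q then A$i$p else 0)" for i k
    by (cases "k = q") (simp_all add: matrix_matrix_mult_def if_distrib cong: if_cong)
  have 2: "(if k = q then A$i$p else 0) * B$k$j = (if k = q then A$i$p * B$k$j else 0)" for k
    by simp
  show ?thesis by (simp only: matrix_matrix_mult_def[of _ B] vec_lambda_beta 1 2) simp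
qed

lemma least_le: "(LEAST i::'n::{finite,wellorder}. True) \<le> i"
  by (simp add: Least_le)

lemma greatest_ge: "i \<le> (GREATEST i::'n::{finite,wellorder}. True)"
proof -
  have "(GREATEST i::'n. True) = Max UNIV" by (rule Greatest_equality) auto
  then show ?thesis by simp
qed

definition condH :: "('n::{finite,wellorder} \<Rightarrow> nat) \<Rightarrow> 'n cmat \<Rightarrow> bool" where
  "condH h g \<longleftrightarrow> matrix_inv g ** Eunit (LEAST i. True) (GREATEST i. True) ** g \<in> hess_space h"

lemma XH_condH: "XH (hess_space h) = {flag g | g. g \<in> GL \<and> condH h g}"
  unfolding XH_def condH_def by simp

lemma bEb: fixes b :: "'n::{finite,wellorder} cmat"
  assumes "b \<in> upper_tri"
  shows "matrix_inv b ** Eunit (LEAST i. True) (GREATEST i. True) ** b =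
    (\<chi> i j. (matrix_inv b $ (LEAST i. True) $ (LEAST i. True) * b $ (GREATEST i. True) $ (GREATEST i. True))
        * Eunit (LEAST i. True) (GREATEST i. True) $ i $ j)"
proof -
  let ?p = "LEAST i::'n. True" and ?q = "GREATEST i::'n. True"
  have u1: "\<forall>i j. j < i \<longrightarrow> matrix_inv b$i$j = 0" using minv_ut[OF assms] upper_tri_def by auto
  have u2: "\<forall>i j. j < i \<longrightarrow> b$i$j = 0" using assms upper_tri_def by auto
  have a: "matrix_inv b $ i $ ?p = 0" if "i \<noteq> ?p" for i
    using u1 that least_le[of i] by (simp add: order_neq_le_trans)
  have c: "b $ ?q $ j = 0" if "j \<noteq> ?q" for j
    using u2 that greatest_ge[of j] by (simp add: le_neq_trans)
  show ?thesis
    unfolding Eunit_def vec_eq_iff using a c by (auto simp: E_entry)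
qed

lemma condH_mult: fixes x b c :: "'n::{finite,wellorder} cmat"
  assumes "mono h" "invertible x" "b \<in> upper_tri" "c \<in> upper_tri" "condH h x"
  shows "condH h (b ** x ** c)"
proof -
  let ?E = "Eunit (LEAST i::'n. True) (GREATEST i::'n. True)"
  let ?s = "matrix_inv b $ (LEAST i. True) $ (LEAST i. True) * b $ (GREATEST i. True) $ (GREATEST i. True)"
  have ib: "invertible b" and ic: "invertible c" using assms upper_tri_def by auto
  have "matrix_inv (b ** x ** c) = matrix_inv c ** matrix_inv x ** matrix_inv b"
    using minv_mult invertible_mult ib ic assms(2) by (metis matrix_mul_assoc)
  then have "matrix_inv (b ** x ** c) ** ?E ** (b ** x ** c) =
     matrix_inv c ** (matrix_inv x ** (matrix_inv b ** ?E ** b) ** x) ** c"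
    by (simp add: matrix_mul_assoc)
  also have "\<dots> = matrix_inv c ** (\<chi> i j. ?s * (matrix_inv x ** ?E ** x)$i$j) ** c"
    by (simp add: bEb[OF assms(3)] scale_mid)
  finally have eq: "matrix_inv (b ** x ** c) ** ?E ** (b ** x ** c) =
     matrix_inv c ** (\<chi> i j. ?s * (matrix_inv x ** ?E ** x)$i$j) ** c" .
  have u1: "\<forall>i j. j < i \<longrightarrow> matrix_inv c$i$j = 0" using minv_ut[OF assms(4)] upper_tri_def by auto
  have u2: "\<forall>i j. j < i \<longrightarrow> c$i$j = 0" using assms upper_tri_def by auto
  show ?thesis unfolding condH_def eq
    using assms(5) unfolding condH_def
    by (intro hess_right[OF assms(1) u2] hess_left[OF u1] hess_scale)
qed



definition inv_st :: "'n::{finite,wellorder} cmat \<Rightarrow> 'n set \<Rightarrow> ('n \<Rightarrow> 'n) \<Rightarrow> bool" where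
  "inv_st M R \<sigma> \<longleftrightarrow> (\<forall>i\<in>R. \<forall>l. M$i$l = (if l = \<sigma> i then 1 else 0)) \<and>
     (\<forall>i. i \<notin> R \<longrightarrow> (\<forall>i'\<in>R. M$i$(\<sigma> i') = 0)) \<and> inj_on \<sigma> R"

lemma ut_by_diag: fixes c :: "'n::{finite,wellorder} cmat"
  assumes "\<forall>i j. j < i \<longrightarrow> c$i$j = 0" "\<forall>i. c$i$i \<noteq> 0" shows "c \<in> upper_tri"
proof -
  have "det c \<noteq> 0" using ut_det[OF assms(1)] assms(2) by simp
  then show ?thesis using assms(1) invertible_det_nz unfolding upper_tri_def by auto
qed

lemma sdm1: fixes f :: "'b::finite \<Rightarrow> 'a::comm_ring_1" shows "(\<Sum>k\<in>UNIV. f k * (if k = a then x else 0)) = f a * (x::'a::comm_ring_1)"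
proof -
  have "(\<Sum>k\<in>UNIV. f k * (if k = a then x else 0)) = (\<Sum>k\<in>(UNIV::'b set). if k = a then f k * x else 0)"
    by (rule sum.cong) auto
  then show ?thesis by simp
qed

lemma sdm2: fixes f :: "'b::finite \<Rightarrow> 'a::comm_ring_1" shows "(\<Sum>k\<in>UNIV. (if k = a then x else 0) * f k) = (x::'a::comm_ring_1) * f a"
proof -
  have "(\<Sum>k\<in>UNIV. (if k = a then x else 0) * f k) = (\<Sum>k\<in>(UNIV::'b set). if k = a then x * f k else 0)"
    by (rule sum.cong) auto
  then show ?thesis by simp
qed

lemma bruhat_step:
  fixes g :: "'n::{finite,wellorder} cmat"
  assumes inv: "invertible g"
  shows "card R = k \<Longrightarrow> (\<forall>i i'. i \<in> R \<longrightarrow> i \<le> i' \<longrightarrow> i' \<in> R) \<Longrightarrow>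
    (\<exists>b c \<sigma>. b \<in> upper_tri \<and> c \<in> upper_tri \<and> inv_st (b ** g ** c) R \<sigma>)"
proof (induction k arbitrary: R)
  case 0
  then have "R = {}" by simp
  then show ?case using mat1_ut unfolding inv_st_def by blast
next
  case (Suc k)
  have "R \<noteq> {}" using Suc.prems(1) by auto
  define r where "r = Min R"
  have rR: "r \<in> R" unfolding r_def using \<open>R \<noteq> {}\<close> by simp
  have rmin: "\<And>i. i \<in> R \<Longrightarrow> r \<le> i" unfolding r_def by simp
  define R' where "R' = R - {r}"
  have cR': "card R' = k" using Suc.prems(1) rR unfolding R'_def by simp
  have upR': "\<forall>i i'. i \<in> R' \<longrightarrow> i \<le> i' \<longrightarrow> i' \<in> R'"
    using Suc.prems(2) rmin unfolding R'_def by (metis DiffE DiffI antisym singletonD)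
  obtain b c \<sigma> where bc: "b \<in> upper_tri" "c \<in> upper_tri" and st: "inv_st (b ** g ** c) R' \<sigma>"
    using Suc.IH[OF cR' upR'] by blast
  define M where "M = b ** g ** c"
  have st1: "\<And>i l. i \<in> R' \<Longrightarrow> M$i$l = (if l = \<sigma> i then 1 else 0)"
   and st2: "\<And>i i'. i \<notin> R' \<Longrightarrow> i' \<in> R' \<Longrightarrow> M$i$(\<sigma> i') = 0"
   and st3: "inj_on \<sigma> R'" using st unfolding inv_st_def M_def by auto
  have rR': "r \<notin> R'" unfolding R'_def by simp
  have R_eq: "R = insert r R'" using rR unfolding R'_def by auto
  have notR: "\<And>i. i \<notin> R \<Longrightarrow> i < r" using Suc.prems(2) rR by (meson not_le)
  have invM: "invertible M" unfolding M_def using inv bc unfolding upper_tri_def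
    by (simp add: invertible_mult)
  have "\<exists>l. M$r$l \<noteq> 0"
  proof (rule ccontr)
    assume "\<not> ?thesis"
    then have "row r M = 0" by (simp add: row_def vec_eq_iff)
    then have "det M = 0" by (rule det_zero_row)
    then show False using invM invertible_det_nz by blast
  qed
  define j where "j = (LEAST l. M$r$l \<noteq> 0)"
  have Mrj: "M$r$j \<noteq> 0" unfolding j_def using \<open>\<exists>l. M$r$l \<noteq> 0\<close> by (rule LeastI_ex)
  have Mrl: "\<And>l. l < j \<Longrightarrow> M$r$l = 0" unfolding j_def using not_less_Least by blast
  have jnot: "\<And>i'. i' \<in> R' \<Longrightarrow> \<sigma> i' \<noteq> j" using st2[OF rR'] Mrj by metis
  define \<beta> where "\<beta> l = (if l = j then 1 / M$r$j else if j < l then - (M$r$l / M$r$j) else 0)" for l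
  define c1 :: "'n cmat" where "c1 = (\<chi> k l. (if k = l \<and> l \<noteq> j then 1 else 0) + (if k = j then \<beta> l else 0))"
  have c1ut: "c1 \<in> upper_tri"
    by (rule ut_by_diag) (auto simp: c1_def \<beta>_def Mrj)
  define M1 where "M1 = M ** c1"
  have M1: "M1$i$l = (if l \<noteq> j then M$i$l else 0) + M$i$j * \<beta> l" for i l
  proof -
    have "c1$k$l = (if l \<noteq> j then (if k = l then 1 else 0) else 0) + (if k = j then \<beta> l else 0)" for k
      unfolding c1_def by auto
    then show ?thesis unfolding M1_def matrix_matrix_mult_def
      by (cases "l = j") (simp_all add: distrib_left sum.distrib sdm1)
  qed
  have M1r: "M1$r$l = (if l = j then 1 else 0)" for l
    using Mrl[of l] Mrj by (auto simp: M1 \<beta>_def)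
  define b1 :: "'n cmat" where "b1 = (\<chi> i k. (if i = k then 1 else 0) + (if k = r \<and> i < r then - M1$i$j else 0))"
  have b1ut: "b1 \<in> upper_tri"
    by (rule ut_by_diag) (auto simp: b1_def)
  define M2 where "M2 = b1 ** M1"
  have M2: "M2$i$l = M1$i$l + (if i < r then - M1$i$j * M1$r$l else 0)" for i l
  proof -
    have "b1$i$k = (if k = i then 1 else 0) + (if k = r then (if i < r then - M1$i$j else 0) else 0)" for k
      unfolding b1_def by auto
    then show ?thesis unfolding M2_def matrix_matrix_mult_def
      by (simp add: distrib_right sum.distrib sdm2)
  qed
  define \<sigma>' where "\<sigma>' = \<sigma>(r := j)"
  have "inv_st M2 R \<sigma>'"
    unfolding inv_st_def
  proof (intro conjI ballI allI impI)
    fix i l assume iR: "i \<in> R"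
    show "M2$i$l = (if l = \<sigma>' i then 1 else 0)"
    proof (cases "i = r")
      case True then show ?thesis by (simp add: M2 M1r \<sigma>'_def)
    next
      case False
      then have iR': "i \<in> R'" using iR R_eq by auto
      have "r \<le> i" using rmin iR by simp
      then have "\<not> i < r" by simp
      moreover have "M$i$j = 0" using st1[OF iR', of j] jnot[OF iR'] by simp
      ultimately show ?thesis using False st1[OF iR'] jnot[OF iR']
        by (auto simp: M2 M1 \<sigma>'_def)
    qed
  next
    fix i i' assume iR: "i \<notin> R" and i'R: "i' \<in> R"
    have ir: "i < r" using notR iR by simp
    have iR': "i \<notin> R'" using iR R_eq by auto
    show "M2$i$(\<sigma>' i') = 0"
    proof (cases "i' = r")
      case True then show ?thesis using ir by (simp add: M2 M1r \<sigma>'_def)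
    next
      case False
      then have i'R': "i' \<in> R'" using i'R R_eq by auto
      let ?s = "\<sigma> i'"
      have sj: "?s \<noteq> j" using jnot[OF i'R'] .
      have "M$r$?s = 0" using st2[OF rR' i'R'] .
      then have "\<beta> ?s = 0" unfolding \<beta>_def using sj by simp
      then have "M1$i$?s = 0" using st2[OF iR' i'R'] sj by (simp add: M1)
      then show ?thesis using False sj by (simp add: M2 M1r \<sigma>'_def)
    qed
  next
    show "inj_on \<sigma>' R"
      unfolding R_eq \<sigma>'_def using st3 jnot rR'
      by (auto simp: inj_on_def)
  qed
  moreover have "M2 = (b1 ** b) ** g ** (c ** c1)"
    unfolding M2_def M1_def M_def by (simp add: matrix_mul_assoc)
  moreover have "b1 ** b \<in> upper_tri" "c ** c1 \<in> upper_tri"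
    using ut_mult b1ut c1ut bc by auto
  ultimately show ?case by metis
qed

lemma bruhat:
  fixes g :: "'n::{finite,wellorder} cmat"
  assumes inv: "invertible g"
  shows "\<exists>b c w. b \<in> upper_tri \<and> c \<in> upper_tri \<and> w permutes UNIV \<and> b ** g ** c = perm_mat w"
proof -
  obtain b c \<sigma> where bc: "b \<in> upper_tri" "c \<in> upper_tri" and st: "inv_st (b ** g ** c) UNIV \<sigma>"
    using bruhat_step[OF inv refl, of UNIV] by blast
  have injs: "inj \<sigma>" using st unfolding inv_st_def by simp
  then have bijs: "bij \<sigma>" by (simp add: bij_def finite_UNIV_inj_surj)
  define w where "w = inv \<sigma>"
  have "bij w" unfolding w_def using bijs by (simp add: bij_imp_bij_inv)
  then have wp: "w permutes UNIV" by (intro bij_imp_permutes) auto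
  have "b ** g ** c = perm_mat w"
    unfolding perm_mat_def vec_eq_iff w_def
  proof (intro allI)
    fix i l
    have "(i = inv \<sigma> l) = (l = \<sigma> i)" using bijs by (metis bij_inv_eq_iff)
    then show "(b ** g ** c) $ i $ l = (\<chi> i j. if i = inv \<sigma> j then 1 else 0) $ i $ l"
      using st unfolding inv_st_def by simp
  qed
  then show ?thesis using bc wp by blast
qed



lemma cont_det[continuous_intros]:
  fixes f :: "'a::topological_space \<Rightarrow> complex^'n::finite^'n"
  assumes "continuous_on S f" shows "continuous_on S (\<lambda>x. det (f x))"
  unfolding det_def
proof (intro continuous_on_sum continuous_on_mult continuous_on_const continuous_on_prod)
  fix p i show "continuous_on S (\<lambda>x. f x $ i $ p i)"
    by (intro continuous_on_component assms)
qed

definition cr :: "'n::{finite,wellorder} cmat \<Rightarrow> 'n \<Rightarrow> complex" where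
  "cr g k = det ((\<chi> i j. if j = k then axis (LEAST i. True) 1 $ i else g$i$j) :: 'n cmat) / det g"

lemma minv_cr: fixes g :: "'n::{finite,wellorder} cmat" assumes "invertible g"
  shows "matrix_inv g $ k $ (LEAST i. True) = cr g k"
proof -
  let ?p = "LEAST i::'n. True"
  let ?x = "matrix_inv g *v axis ?p 1"
  have d0: "det g \<noteq> 0" using assms invertible_det_nz by blast
  have "g *v ?x = axis ?p 1"
    by (simp add: matrix_vector_mul_assoc minv[OF assms] matrix_vector_mul_lid)
  then have x: "?x = (\<chi> k. det(\<chi> r s. if s=k then axis ?p 1 $r else g$r$s) / det g)"
    using cramer[OF d0] by blast
  have "matrix_inv g $ k $ ?p = ?x $ k" by (simp add: mv_axis)
  also have "\<dots> = cr g k" by (subst x) (simp add: cr_def)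
  finally show ?thesis .
qed

lemma condH_iff: fixes g :: "'n::{finite,wellorder} cmat" assumes "invertible g"
  shows "condH h g \<longleftrightarrow> (\<forall>k l. h l < idx k \<longrightarrow> cr g k * g $ (GREATEST i. True) $ l = 0)"
  unfolding condH_def hess_space_def Eunit_def using minv_cr[OF assms] by (simp add: E_entry)

lemma cont_cr: "continuous_on GL (\<lambda>g::'n::{finite,wellorder} cmat. cr g k * g $ q $ l)"
proof -
  have c1: "continuous_on GL (\<lambda>g::'n cmat. g $ i $ j)" for i j
    by (intro continuous_on_component continuous_on_id)
  have c2: "continuous_on GL (\<lambda>g::'n cmat. det g)" by (rule cont_det[OF continuous_on_id])
  have c3: "continuous_on GL (\<lambda>g::'n cmat. det ((\<chi> i j. if j = k then axis (LEAST i. True) 1 $ i else g$i$j) :: 'n cmat))"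
  proof -
    have c1': "continuous_on GL (\<lambda>x::'n cmat. if j = k then a else x$i$j)" for i j and a :: complex
      by (cases "j = k") (simp_all add: c1)
    show ?thesis by (intro cont_det continuous_on_vec_lambda c1')
  qed
  have "continuous_on GL (\<lambda>g::'n cmat. cr g k)"
    unfolding cr_def by (rule continuous_on_divide[OF c3 c2]) (auto simp: GL_def invertible_det_nz)
  then show ?thesis by (intro continuous_on_mult c1)
qed

lemma istop: "istopology (\<lambda>U. U \<subseteq> flag_variety \<and> openin (top_of_set GL) {g \<in> GL. flag g \<in> U})"
proof -
  have A: "\<And>S T. openin (top_of_set GL) {g \<in> GL. flag g \<in> S} \<Longrightarrow> openin (top_of_set GL) {g \<in> GL. flag g \<in> T}
     \<Longrightarrow> openin (top_of_set GL) {g \<in> GL. flag g \<in> S \<inter> T}"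
  proof -
    fix S T :: "(nat \<Rightarrow> (complex,'n::{finite,wellorder}) vec set) set"
    assume "openin (top_of_set GL) {g \<in> GL. flag g \<in> S}" "openin (top_of_set GL) {g \<in> GL. flag g \<in> T}"
    moreover have "{g \<in> GL. flag g \<in> S \<inter> T} = {g \<in> GL. flag g \<in> S} \<inter> {g \<in> GL. flag g \<in> T}" by auto
    ultimately show "openin (top_of_set GL) {g \<in> GL. flag g \<in> S \<inter> T}" by (simp add: openin_Int)
  qed
  have B: "\<And>K. (\<forall>S\<in>K. openin (top_of_set GL) {g \<in> GL. flag g \<in> S}) \<Longrightarrow>
     openin (top_of_set GL) {g \<in> GL. flag g \<in> \<Union>K}"
  proof -
    fix K :: "(nat \<Rightarrow> (complex,'n::{finite,wellorder}) vec set) set set"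
    assume K: "\<forall>S\<in>K. openin (top_of_set GL) {g \<in> GL. flag g \<in> S}"
    have "{g \<in> GL. flag g \<in> \<Union>K} = \<Union>((\<lambda>S. {g \<in> GL. flag g \<in> S}) ` K)" by auto
    then show "openin (top_of_set GL) {g \<in> GL. flag g \<in> \<Union>K}"
      using K by (auto intro!: openin_Union)
  qed
  show ?thesis unfolding istopology_def using A B by blast
qed

lemma openin_ft: "openin flag_top U \<longleftrightarrow> U \<subseteq> flag_variety \<and> openin (top_of_set GL) {g \<in> GL. flag g \<in> U}"
  unfolding flag_top_def by (simp only: topology_inverse'[OF istop])

lemma topspace_ft: "topspace flag_top = flag_variety"
proof -
  have "openin flag_top flag_variety"
    unfolding openin_ft flag_variety_def
  proof
    have eq: "{g \<in> GL. flag g \<in> flag ` GL} = GL" by auto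
    show "openin (top_of_set GL) {g \<in> GL. flag g \<in> flag ` GL}"
      unfolding eq by (rule openin_subtopology_self)
  qed simp
  then have "flag_variety \<subseteq> topspace flag_top" by (rule openin_subset)
  moreover have "topspace flag_top \<subseteq> flag_variety"
    using openin_topspace[of flag_top] openin_ft by blast
  ultimately show ?thesis by blast
qed




lemma XH_mem: fixes h :: "'n::{finite,wellorder} \<Rightarrow> nat"
  assumes "mono h" "g \<in> GL" shows "flag g \<in> XH (hess_space h) \<longleftrightarrow> condH h g"
proof
  assume "flag g \<in> XH (hess_space h)"
  then obtain g' where g': "flag g = flag g'" "g' \<in> GL" "condH h g'" unfolding XH_condH by auto
  obtain d where d: "d \<in> upper_tri" "g = g' ** d" using flag_eq[of g' g] g' assms(2) unfolding GL_def by auto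
  have "condH h (mat 1 ** g' ** d)"
    using condH_mult[OF assms(1) _ mat1_ut d(1) g'(3)] g'(2) unfolding GL_def by blast
  then show "condH h g" using d(2) by (simp add: matrix_mul_lid)
next
  assume "condH h g" then show "flag g \<in> XH (hess_space h)" unfolding XH_condH using assms by auto
qed

lemma closed_XH: fixes h :: "'n::{finite,wellorder} \<Rightarrow> nat"
  assumes "mono h" shows "closedin flag_top (XH (hess_space h))"
  unfolding closedin_def topspace_ft
proof
  show sub: "XH (hess_space h) \<subseteq> flag_variety" unfolding XH_condH flag_variety_def by auto
  let ?q = "GREATEST i::'n. True"
  have eq: "{g \<in> GL. flag g \<in> flag_variety - XH (hess_space h)} =
     (\<Union>kl\<in>{(k,l). h l < idx k}. GL \<inter> (\<lambda>g. cr g (fst kl) * g $ ?q $ (snd kl)) -` (- {0}))"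
  proof -
    have fv: "g \<in> GL \<Longrightarrow> flag g \<in> flag_variety" for g unfolding flag_variety_def by auto
    show ?thesis
    proof (rule set_eqI)
      fix g
      have "g \<in> {g \<in> GL. flag g \<in> flag_variety - XH (hess_space h)} \<longleftrightarrow> g \<in> GL \<and> \<not> condH h g"
        using fv XH_mem[OF assms, of g] by blast
      also have "\<dots> \<longleftrightarrow> g \<in> GL \<and> (\<exists>k l. h l < idx k \<and> cr g k * g $ ?q $ l \<noteq> 0)"
        using condH_iff[of g h] unfolding GL_def by blast
      also have "\<dots> \<longleftrightarrow> g \<in> (\<Union>kl\<in>{(k,l). h l < idx k}. GL \<inter> (\<lambda>g. cr g (fst kl) * g $ ?q $ (snd kl)) -` (- {0}))"
        by force
      finally show "g \<in> {g \<in> GL. flag g \<in> flag_variety - XH (hess_space h)} \<longleftrightarrow> g \<in> (\<Union>kl\<in>{(k,l). h l < idx k}. GL \<inter> (\<lambda>g. cr g (fst kl) * g $ ?q $ (snd kl)) -` (- {0}))" .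
    qed
  qed
  show "openin flag_top (flag_variety - XH (hess_space h))"
    unfolding openin_ft
  proof
    show "flag_variety - XH (hess_space h) \<subseteq> flag_variety" by blast
    have op: "openin (top_of_set GL) (GL \<inter> (\<lambda>g. cr g (fst kl) * g $ ?q $ (snd kl)) -` (- {0}))" for kl
      by (rule continuous_openin_preimage_gen[OF cont_cr]) (simp add: open_Compl)
    show "openin (top_of_set GL) {g \<in> GL. flag g \<in> flag_variety - XH (hess_space h)}"
      unfolding eq by (rule openin_Union) (erule imageE, simp only: op)
  qed
qed



theorem mainTheorem2:
  fixes h :: "'n::{finite,wellorder} \<Rightarrow> nat"
  assumes "hessenberg_fun h"
  shows "\<exists>W. W \<subseteq> {w. w permutes (UNIV :: 'n set)} \<and>
            XH (hess_space h) = (\<Union>w\<in>W. schubert w)"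
proof -
  have mh: "mono h" using assms hessenberg_fun_def by blast
  define W where "W = {w. w permutes (UNIV :: 'n set) \<and> schubert w \<subseteq> XH (hess_space h)}"
  have "XH (hess_space h) \<subseteq> (\<Union>w\<in>W. schubert w)"
  proof
    fix F assume "F \<in> XH (hess_space h)"
    then obtain g where g: "F = flag g" "g \<in> GL" "condH h g" unfolding XH_condH by auto
    have ig: "invertible g" using g GL_def by auto
    obtain b c w where bcw: "b \<in> upper_tri" "c \<in> upper_tri" "w permutes UNIV" "b ** g ** c = perm_mat w"
      using bruhat[OF ig] by blast
    let ?P = "perm_mat w"
    let ?cell = "{flag (b'' ** ?P) | b''. b'' \<in> upper_tri}"
    have "invertible b" "invertible c" using bcw(1,2) unfolding upper_tri_def by auto
    then have iP: "invertible ?P" unfolding bcw(4)[symmetric] using ig invertible_mult by blast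
    have cP: "condH h ?P" using condH_mult[OF mh ig bcw(1,2) g(3)] bcw(4) by simp
    have cell_top: "?cell \<subseteq> topspace flag_top"
    proof
      fix G assume "G \<in> ?cell"
      then obtain b'' where b'': "b'' \<in> upper_tri" "G = flag (b'' ** ?P)" by auto
      have "invertible b''" using b''(1) upper_tri_def by auto
      then have "b'' ** ?P \<in> GL" using iP invertible_mult unfolding GL_def by blast
      then show "G \<in> topspace flag_top" unfolding topspace_ft flag_variety_def using b''(2) by blast
    qed
    have cell_XH: "?cell \<subseteq> XH (hess_space h)"
    proof
      fix G assume "G \<in> ?cell"
      then obtain b'' where b'': "b'' \<in> upper_tri" "G = flag (b'' ** ?P)" by auto
      have "condH h (b'' ** ?P ** mat 1)" using condH_mult[OF mh iP b''(1) mat1_ut cP] .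
      then have "condH h (b'' ** ?P)" by (simp add: matrix_mul_rid)
      moreover have "invertible b''" using b''(1) upper_tri_def by auto
      then have "b'' ** ?P \<in> GL" using iP invertible_mult unfolding GL_def by blast
      ultimately show "G \<in> XH (hess_space h)" unfolding XH_condH using b''(2) by blast
    qed
    have "schubert w \<subseteq> XH (hess_space h)"
      unfolding schubert_def by (rule closure_of_minimal[OF cell_XH closed_XH[OF mh]])
    then have wW: "w \<in> W" unfolding W_def using bcw by auto
    have "g ** c = matrix_inv b ** ?P"
    proof -
      have ib: "invertible b" using bcw upper_tri_def by auto
      have "matrix_inv b ** ?P = (matrix_inv b ** b) ** g ** c"
        unfolding bcw(4)[symmetric] by (simp add: matrix_mul_assoc)
      then show ?thesis by (simp add: minv[OF ib] matrix_mul_lid)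
    qed
    then have "F = flag (matrix_inv b ** ?P)" using g(1) flag_mult_ut[OF bcw(2)] by metis
    then have "F \<in> ?cell" using minv_ut[OF bcw(1)] by blast
    then have "F \<in> schubert w" unfolding schubert_def using closure_of_subset[OF cell_top] by blast
    then show "F \<in> (\<Union>w\<in>W. schubert w)" using wW by blast
  qed
  moreover have "(\<Union>w\<in>W. schubert w) \<subseteq> XH (hess_space h)" unfolding W_def by auto
  moreover have "W \<subseteq> {w. w permutes (UNIV :: 'n set)}" unfolding W_def by auto
  ultimately show ?thesis by blast
qed


end
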